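(* Let $f$ and $g$ be real-valued functions defined on $[0,\infty)$ such that $g(x)=\int_x^\infty f(t)\,dt$ for all $x\geq0$. Assume that, as $x$ traverses from $0$ to $+\infty$, $f(x)$ changes sign in one of the orders "$-,+$", "$+,-$", "$+,-,+$" or "$-,+,-,+$". Then the sign variation of $g(x)$, as $x$ traverses from $0$ to $+\infty$, is one of the final segments of the sign variation of $f$ (i.e. it is obtained from the sign sequence of $f$ by deleting some, possibly none, of its initial terms, keeping at least the last one). *)

theory Defs
  imports "HOL-Analysis.Analysis"
begin

text \<open>A sign is encoded as the real number 1 (positive) or -1 (negative).
  The function h has sign s on the set I if s * h is nonnegative on I and h vanishes
  at only finitely many points of I.\<close>
definition sign_on :: "(real \<Rightarrow> real) \<Rightarrow> real set \<Rightarrow> real \<Rightarrow> bool" where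
  "sign_on h I s \<longleftrightarrow> (\<forall>x\<in>I. s * h x \<ge> 0) \<and> finite {x\<in>I. h x = 0}"

definition has_sign_pattern :: "(real \<Rightarrow> real) \<Rightarrow> real list \<Rightarrow> bool" where
  "has_sign_pattern h ss \<longleftrightarrow> ss \<noteq> [] \<and>
     (\<exists>b :: nat \<Rightarrow> real. b 0 = 0 \<and>
        (\<forall>i. Suc i < length ss \<longrightarrow> b i < b (Suc i) \<and> sign_on h {b i<..<b (Suc i)} (ss ! i)) \<and>
        sign_on h {b (length ss - 1)<..} (last ss))"

end

theory Submission
  imports Defs
begin


lemma pos_int:
  fixes h :: "real \<Rightarrow> real"
  assumes hI: "(h has_integral I) {u<..<v}" and uv: "u < v"
    and nn: "\<forall>x\<in>{u<..<v}. 0 \<le> h x" and fin: "finite {x\<in>{u<..<v}. h x = 0}"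
  shows "I > 0"
proof -
  let ?S = "{u<..<v}" let ?Z = "{x\<in>{u<..<v}. h x = 0}"
  define A where "A = ?S - ?Z"
  have "I \<ge> 0" using has_integral_nonneg[OF hI] nn by auto
  moreover have "I \<noteq> 0"
  proof
    assume I0: "I = 0"
    have ai: "h absolutely_integrable_on ?S"
      using nonnegative_absolutely_integrable_1[of h ?S] hI nn by (auto simp: integrable_on_def)
    have hA: "(h has_integral 0) A"
    proof -
      have "(h has_integral 0) ?S" using hI I0 by simp
      moreover have "negligible {x \<in> ?S - A. h x \<noteq> 0}" by (rule negligible_subset[OF negligible_empty]) (auto simp: A_def)
      moreover have "negligible {x \<in> A - ?S. h x \<noteq> 0}" by (rule negligible_subset[OF negligible_empty]) (auto simp: A_def)
      ultimately show ?thesis using has_integral_spike_set_eq by blast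
    qed
    have aiA: "h absolutely_integrable_on A"
      using nonnegative_absolutely_integrable_1[of h A] hA nn by (auto simp: integrable_on_def A_def)
    have LA: "(LINT x:A|lebesgue. h x) = 0"
      using set_lebesgue_integral_eq_integral(2)[OF aiA] hA by (simp add: integral_unique)
    have intg: "integrable lebesgue (\<lambda>x. indicator ?S x * h x)"
      using ai by (simp add: set_integrable_def)
    have Ameas: "A \<in> sets lebesgue"
    proof -
      have "?S \<in> sets lebesgue" by simp
      moreover have "?Z \<in> sets lebesgue" using fin negligible_finite negligible_imp_sets by blast
      ultimately show ?thesis unfolding A_def by auto
    qed
    have "(LINT x:A|lebesgue. indicator ?S x * h x) = (LINT x:A|lebesgue. h x)"
      unfolding set_lebesgue_integral_def
      by (rule Bochner_Integration.integral_cong) (auto simp: A_def indicator_def)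
    hence "A \<in> null_sets lebesgue"
      using null_if_pos_func_has_zero_int[OF intg Ameas] LA nn
      by (auto simp: A_def less_le indicator_def)
    hence "negligible A" by (simp add: negligible_iff_null_sets)
    hence "negligible (A \<union> ?Z)" using fin negligible_Un by blast
    moreover have "A \<union> ?Z = {u<..<v}" by (auto simp: A_def)
    ultimately have "negligible {u<..<v}" using negligible_Un by metis
    thus False using negligible_interval(2)[of u v] uv by (simp add: box_real)
  qed
  ultimately show ?thesis by simp
qed


lemma sign_on_subset: "sign_on h I s \<Longrightarrow> J \<subseteq> I \<Longrightarrow> sign_on h J s"
  unfolding sign_on_def
  apply (intro conjI)
   apply blast
  apply (rule finite_subset[of _ "{x\<in>I. h x = 0}"])
  by auto

lemma sign_on_Un: "sign_on h I s \<Longrightarrow> sign_on h J s \<Longrightarrow> s * h c \<ge> 0 \<Longrightarrow> sign_on h (I \<union> {c} \<union> J) s"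
proof -
  assume a: "sign_on h I s" "sign_on h J s" "s * h c \<ge> 0"
  have "{x \<in> I \<union> {c} \<union> J. h x = 0} \<subseteq> {x\<in>I. h x = 0} \<union> {c} \<union> {x\<in>J. h x = 0}" by auto
  then show ?thesis using a unfolding sign_on_def by (auto intro: finite_subset)
qed

lemma sign_on_strict: "(\<forall>x\<in>I. s * h x > 0) \<Longrightarrow> sign_on h I s"
proof -
  assume a: "\<forall>x\<in>I. s * h x > 0"
  hence e: "{x\<in>I. h x = 0} = {}" by force
  show ?thesis unfolding sign_on_def e using a by (simp add: less_imp_le)
qed

lemma diff_int:
  fixes f g :: "real \<Rightarrow> real"
  assumes g_def: "\<forall>x\<ge>0. (f has_integral g x) {x..}" and uv: "0 \<le> u" "u \<le> v"
  shows "(f has_integral (g u - g v)) {u..<v}"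
proof -
  have "((\<lambda>t. if t \<in> {u..} then f t else 0) has_integral g u) UNIV"
    using has_integral_restrict_UNIV[of "{u..}" f "g u"] g_def uv by simp
  moreover have "((\<lambda>t. if t \<in> {v..} then f t else 0) has_integral g v) UNIV"
    using has_integral_restrict_UNIV[of "{v..}" f "g v"] g_def uv by simp
  ultimately have "((\<lambda>t. (if t \<in> {u..} then f t else 0) - (if t \<in> {v..} then f t else 0)) has_integral (g u - g v)) UNIV"
    by (rule has_integral_diff)
  moreover have "(\<lambda>t. (if t \<in> {u..} then f t else 0) - (if t \<in> {v..} then f t else 0)) = (\<lambda>t. if t \<in> {u..<v} then f t else 0)"
    using uv by (auto simp: fun_eq_iff)
  ultimately show ?thesis using has_integral_restrict_UNIV[of "{u..<v}" f "g u - g v"] by simp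
qed

lemma diff_int_closed:
  fixes f g :: "real \<Rightarrow> real"
  assumes g_def: "\<forall>x\<ge>0. (f has_integral g x) {x..}" and uv: "0 \<le> u" "u \<le> v"
  shows "(f has_integral (g u - g v)) {u..v}"
proof -
  have "negligible {x \<in> {u..<v} - {u..v}. f x \<noteq> 0}" by (rule negligible_subset[OF negligible_empty]) (auto simp: less_le)
  moreover have "negligible {x \<in> {u..v} - {u..<v}. f x \<noteq> 0}" by (rule negligible_subset[of "{v}"]) auto
  ultimately show ?thesis using diff_int[OF assms] has_integral_spike_set_eq by blast
qed

lemma diff_int_open:
  fixes f g :: "real \<Rightarrow> real"
  assumes g_def: "\<forall>x\<ge>0. (f has_integral g x) {x..}" and uv: "0 \<le> u" "u \<le> v"
  shows "(f has_integral (g u - g v)) {u<..<v}"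
proof -
  have "negligible {x \<in> {u..<v} - {u<..<v}. f x \<noteq> 0}" by (rule negligible_subset[of "{u}"]) (auto simp: less_le)
  moreover have "negligible {x \<in> {u<..<v} - {u..<v}. f x \<noteq> 0}" by (rule negligible_subset[OF negligible_empty]) auto
  ultimately show ?thesis using diff_int[OF assms] has_integral_spike_set_eq by blast
qed

lemma strict_dec:
  fixes f g :: "real \<Rightarrow> real"
  assumes g_def: "\<forall>x\<ge>0. (f has_integral g x) {x..}" and uv: "0 \<le> u" "u < v"
    and sg: "sign_on f {u<..<v} s" and s: "s = 1 \<or> s = -1"
  shows "s * g v < s * g u"
proof -
  have "((\<lambda>x. s * f x) has_integral (s * (g u - g v))) {u<..<v}"
    using diff_int_open[OF g_def uv(1)] uv(2) by (intro has_integral_mult_right) auto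
  moreover have "{x\<in>{u<..<v}. s * f x = 0} = {x\<in>{u<..<v}. f x = 0}" using s by auto
  ultimately have "s * (g u - g v) > 0"
    using sg uv by (intro pos_int[where h="\<lambda>x. s * f x"]) (auto simp: sign_on_def)
  then show ?thesis by (simp add: algebra_simps)
qed

lemma tail_pos:
  fixes f g :: "real \<Rightarrow> real"
  assumes g_def: "\<forall>x\<ge>0. (f has_integral g x) {x..}" and c: "0 \<le> c"
    and sg: "sign_on f {c<..} s" and s: "s = 1 \<or> s = -1" and x: "c \<le> x"
  shows "s * g x > 0"
proof -
  have x0: "x + 1 \<ge> 0" using c x by linarith
  have "((\<lambda>t. s * f t) has_integral (s * g (x+1))) {x+1..}"
    using g_def x0 by (intro has_integral_mult_right) blast
  moreover have "\<forall>t\<in>{x+1..}. 0 \<le> s * f t" using sg x unfolding sign_on_def by force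
  ultimately have "s * g (x+1) \<ge> 0"
    using has_integral_nonneg by blast
  moreover have "sign_on f {x<..<x+1} s" by (rule sign_on_subset[OF sg]) (use x in auto)
  moreover have "s * g (x+1) < s * g x"
    using c x by (intro strict_dec[OF g_def _ _ _ s] calculation(2)) auto
  ultimately show ?thesis by linarith
qed

lemma g_cont:
  fixes f g :: "real \<Rightarrow> real"
  assumes g_def: "\<forall>x\<ge>0. (f has_integral g x) {x..}" and uv: "0 \<le> u" "u \<le> v"
  shows "continuous_on {u..v} g"
proof -
  have "f integrable_on {u..v}" using diff_int_closed[OF assms] by blast
  hence C: "continuous_on {u..v} (\<lambda>x. integral {x..v} f + g v)"
    by (rule continuous_on_add[OF indefinite_integral_continuous_1' continuous_on_const])
  moreover have E: "\<forall>x\<in>{u..v}. integral {x..v} f + g v = g x"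
  proof
    fix x assume "x \<in> {u..v}"
    hence "0 \<le> x" "x \<le> v" using uv by auto
    hence "integral {x..v} f = g x - g v" by (rule integral_unique[OF diff_int_closed[OF g_def]])
    thus "integral {x..v} f + g v = g x" by simp
  qed
  show ?thesis using continuous_on_eq[OF C] E by blast
qed



definition pp :: "(real \<Rightarrow> real) \<Rightarrow> real \<Rightarrow> real list \<Rightarrow> bool" where
 "pp h a ss \<longleftrightarrow> ss \<noteq> [] \<and> (\<exists>b::nat\<Rightarrow>real. b 0 = a \<and>
    (\<forall>i. Suc i < length ss \<longrightarrow> b i < b (Suc i) \<and> sign_on h {b i<..<b (Suc i)} (ss ! i)) \<and>
    sign_on h {b (length ss - 1)<..} (last ss))"

lemma hsp_pp: "has_sign_pattern h ss = pp h 0 ss"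
  by (simp add: has_sign_pattern_def pp_def)

lemma pp_single: "sign_on h {a<..} s \<Longrightarrow> pp h a [s]"
  unfolding pp_def by (rule conjI, simp, rule exI[of _ "\<lambda>_. a"]) simp

lemma pp_cons:
  assumes "pp h c ss" "a < c" "sign_on h {a<..<c} s"
  shows "pp h a (s#ss)"
proof -
  obtain b where ne: "ss \<noteq> []" and b0: "b 0 = c"
    and bi: "\<forall>i. Suc i < length ss \<longrightarrow> b i < b (Suc i) \<and> sign_on h {b i<..<b (Suc i)} (ss ! i)"
    and bl: "sign_on h {b (length ss - 1)<..} (last ss)"
    using assms(1) unfolding pp_def by blast
  define b' where "b' = (\<lambda>i. case i of 0 \<Rightarrow> a | Suc j \<Rightarrow> b j)"
  have "\<forall>i. Suc i < length (s#ss) \<longrightarrow> b' i < b' (Suc i) \<and> sign_on h {b' i<..<b' (Suc i)} ((s#ss) ! i)"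
  proof (intro allI impI)
    fix i assume i: "Suc i < length (s#ss)"
    show "b' i < b' (Suc i) \<and> sign_on h {b' i<..<b' (Suc i)} ((s#ss) ! i)"
    proof (cases i)
      case 0 then show ?thesis using assms b0 by (simp add: b'_def)
    next
      case (Suc j) then show ?thesis using bi i by (simp add: b'_def)
    qed
  qed
  moreover have L: "length (s#ss) - 1 = Suc (length ss - 1)" using ne by (cases ss) auto
  have B: "b' (Suc (length ss - 1)) = b (length ss - 1)" by (simp add: b'_def)
  have "last (s#ss) = last ss" using ne by simp
  hence "sign_on h {b' (length (s#ss) - 1)<..} (last (s#ss))" unfolding L B using bl by simp
  ultimately show ?thesis unfolding pp_def by (intro conjI, simp, intro exI[of _ b']) (simp add: b'_def)
qed

lemma pp_merge:
  assumes "pp h c (s#ss)" "a < c" "sign_on h {a<..<c} s" "s * h c \<ge> 0"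
  shows "pp h a (s#ss)"
proof -
  obtain b where b0: "b 0 = c"
    and bi: "\<forall>i. Suc i < length (s#ss) \<longrightarrow> b i < b (Suc i) \<and> sign_on h {b i<..<b (Suc i)} ((s#ss) ! i)"
    and bl: "sign_on h {b (length (s#ss) - 1)<..} (last (s#ss))"
    using assms(1) unfolding pp_def by blast
  define b' where "b' = b(0 := a)"
  show ?thesis
  proof (cases "ss = []")
    case True
    have "{a<..} = {a<..<c} \<union> {c} \<union> {c<..}" using assms(2) by auto
    hence "sign_on h {a<..} s" using sign_on_Un[OF assms(3) _ assms(4), of "{c<..}"] bl b0 True by simp
    then show ?thesis using True by (simp add: pp_single)
  next
    case False
    have "\<forall>i. Suc i < length (s#ss) \<longrightarrow> b' i < b' (Suc i) \<and> sign_on h {b' i<..<b' (Suc i)} ((s#ss) ! i)"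
    proof (intro allI impI)
      fix i assume i: "Suc i < length (s#ss)"
      show "b' i < b' (Suc i) \<and> sign_on h {b' i<..<b' (Suc i)} ((s#ss) ! i)"
      proof (cases i)
        case 0
        have 1: "c < b 1" "sign_on h {c<..<b 1} s" using bi[rule_format, of 0] i 0 b0 by auto
        have "{a<..<b 1} = {a<..<c} \<union> {c} \<union> {c<..<b 1}" using assms(2) 1 by auto
        hence "sign_on h {a<..<b 1} s" using sign_on_Un[OF assms(3) 1(2) assms(4)] by simp
        then show ?thesis using 0 1 assms(2) by (simp add: b'_def)
      next
        case (Suc j) then show ?thesis using bi[rule_format, of i] i by (simp add: b'_def)
      qed
    qed
    moreover have "length (s#ss) - 1 \<noteq> 0" using False by simp
    hence "sign_on h {b' (length (s#ss) - 1)<..} (last (s#ss))" using bl by (simp add: b'_def)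
    ultimately show ?thesis unfolding pp_def by (intro conjI, simp, intro exI[of _ b']) (simp add: b'_def)
  qed
qed


theorem lemma7:
  fixes f g :: "real \<Rightarrow> real" and sf :: "real list"
  assumes g_def: "\<forall>x\<ge>0. (f has_integral g x) {x..}"
    and pat: "sf \<in> {[-1, 1], [1, -1], [1, -1, 1], [-1, 1, -1, 1]}"
    and f_pat: "has_sign_pattern f sf"
  shows "\<exists>k < length sf. has_sign_pattern g (drop k sf)"
proof -
  obtain b where ne: "sf \<noteq> []" and b0: "b 0 = 0"
    and bi: "\<forall>i. Suc i < length sf \<longrightarrow> b i < b (Suc i) \<and> sign_on f {b i<..<b (Suc i)} (sf ! i)"
    and bl: "sign_on f {b (length sf - 1)<..} (last sf)"
    using f_pat unfolding has_sign_pattern_def by blast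
  define k where "k = length sf"
  have alt: "\<forall>i. Suc i < k \<longrightarrow> sf!(Suc i) = - sf!i"
    using pat by (auto simp: k_def less_Suc_eq nth_Cons split: nat.splits)
  have pm: "\<forall>i<k. sf!i = 1 \<or> sf!i = -1"
    using pat by (auto simp: k_def less_Suc_eq nth_Cons split: nat.splits)
  have bnn: "0 \<le> b i" if "i < k" for i
    using that
  proof (induction i)
    case 0 then show ?case using b0 by simp
  next
    case (Suc i) then show ?case using bi[rule_format, of i] by (simp add: k_def)
  qed
  have k1: "k \<ge> 1" using ne by (simp add: k_def Suc_le_eq)
  have lst: "last sf = sf!(k-1)" using ne by (simp add: last_conv_nth k_def)
  have claim: "\<exists>p. j \<le> p \<and> p < k \<and> pp g (b j) (drop p sf) \<and> 0 \<le> sf!p * g (b j)"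
    if "j \<le> k - 1" for j
    using that
  proof (induction j rule: inc_induct)
    case base
    let ?s = "sf!(k-1)"
    have s: "?s = 1 \<or> ?s = -1" using pm k1 by simp
    have bk: "0 \<le> b (k-1)" using bnn k1 by simp
    have tp: "?s * g x > 0" if "b (k-1) \<le> x" for x
      using tail_pos[OF g_def bk _ s that] bl lst by (simp add: k_def)
    have dr: "drop (k-1) sf = [?s]"
      using k1 Cons_nth_drop_Suc[of "k-1" sf] by (simp add: k_def)
    have "sign_on g {b (k-1)<..} ?s" by (rule sign_on_strict) (use tp in auto)
    hence "pp g (b (k-1)) (drop (k-1) sf)" unfolding dr by (rule pp_single)
    moreover have "0 \<le> ?s * g (b (k-1))" using tp[of "b (k-1)"] by simp
    ultimately show ?case using k1 by (intro exI[of _ "k-1"]) auto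
  next
    case (step n)
    from step.IH obtain p where p: "Suc n \<le> p" "p < k" "pp g (b (Suc n)) (drop p sf)"
      "0 \<le> sf!p * g (b (Suc n))" by blast
    define \<sigma> where "\<sigma> = sf!n"
    define a where "a = b n"
    define d where "d = b (Suc n)"
    have nk: "Suc n < k" using step.hyps k1 by linarith
    have ad: "a < d" and seg: "sign_on f {a<..<d} \<sigma>"
      using bi[rule_format, of n] nk by (auto simp: a_def d_def \<sigma>_def k_def)
    have a0: "0 \<le> a" using bnn nk by (simp add: a_def)
    have sig: "\<sigma> = 1 \<or> \<sigma> = -1" using pm nk by (simp add: \<sigma>_def)
    have dec: "\<sigma> * g v < \<sigma> * g u" if "a \<le> u" "u < v" "v \<le> d" for u v
    proof -
      have "sign_on f {u<..<v} \<sigma>" by (rule sign_on_subset[OF seg]) (use that in auto)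
      then show ?thesis using strict_dec[OF g_def _ that(2) _ sig] that a0 by simp
    qed
    have dp: "drop p sf = sf!p # drop (Suc p) sf" using p(2) Cons_nth_drop_Suc[of p sf] by (simp add: k_def)
    have p1: "Suc (p-1) = p" using p(1) by simp
    have dp1: "drop (p-1) sf = sf!(p-1) # drop p sf"
      using p(2) Cons_nth_drop_Suc[of "p-1" sf] p1 by (simp add: k_def)
    have alt1: "sf!p = - sf!(p-1)" using alt[rule_format, of "p-1"] p1 p(2) by simp
    have sp: "sf!p = 1 \<or> sf!p = -1" using pm p(2) by simp
    have ppd: "pp g d (sf!p # drop (Suc p) sf)" using p(3) dp by (simp add: d_def)
    show ?case
    proof (cases "0 \<le> \<sigma> * g d")
      case True
      have pos: "\<sigma> * g x > 0" if "a \<le> x" "x < d" for x using dec[of x d] that True ad by simp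
      have so: "sign_on g {a<..<d} \<sigma>" by (rule sign_on_strict) (use pos in auto)
      have pa: "0 \<le> \<sigma> * g a" using pos[of a] ad by simp
      show ?thesis
      proof (cases "sf!p = \<sigma>")
        case True
        have "pp g a (sf!p # drop (Suc p) sf)"
          using pp_merge[OF ppd ad] so \<open>0 \<le> \<sigma> * g d\<close> True by simp
        then show ?thesis using p True pa dp step.hyps by (intro exI[of _ p]) (auto simp: a_def)
      next
        case False
        hence s1: "sf!(p-1) = \<sigma>" using alt1 sp sig by auto
        have "pp g a (sf!(p-1) # drop p sf)"
          using pp_cons[OF p(3)[folded d_def] ad] so s1 by simp
        then show ?thesis using p s1 pa dp1 step.hyps
          by (intro exI[of _ "p-1"]) (auto simp: a_def)
      qed
    next
      case False
      hence neg: "\<sigma> * g d < 0" by simp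
      have spn: "sf!p = -\<sigma>"
      proof (rule ccontr)
        assume "sf!p \<noteq> -\<sigma>"
        hence "sf!p = \<sigma>" using sp sig by auto
        thus False using p(4) neg by (simp add: d_def)
      qed
      hence s1: "sf!(p-1) = \<sigma>" using alt1 by simp
      have ppd': "pp g d (-\<sigma> # drop (Suc p) sf)" using ppd spn by simp
      have nd: "0 \<le> -\<sigma> * g d" using neg by simp
      show ?thesis
      proof (cases "\<sigma> * g a \<le> 0")
        case True
        have ng: "-\<sigma> * g x > 0" if "a < x" "x < d" for x using dec[of a x] that True by simp
        have so: "sign_on g {a<..<d} (-\<sigma>)" by (rule sign_on_strict) (use ng in auto)
        have "pp g a (-\<sigma> # drop (Suc p) sf)" by (rule pp_merge[OF ppd' ad so nd])
        then show ?thesis using p spn True dp step.hyps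
          by (intro exI[of _ p]) (auto simp: a_def)
      next
        case False
        have cont: "continuous_on {a..d} (\<lambda>x. - (\<sigma> * g x))"
          using g_cont[OF g_def a0, of d] ad by (intro continuous_intros) auto
        obtain c where c: "a \<le> c" "c \<le> d" "- (\<sigma> * g c) = 0"
          using IVT'[OF _ _ _ cont, of 0] False neg ad by force
        have ca: "a < c" using c False by (cases "a = c") auto
        have cd: "c < d" using c neg by (cases "c = d") auto
        have gc: "\<sigma> * g c = 0" using c(3) by simp
        have q1: "\<sigma> * g x > 0" if "a < x" "x < c" for x
          using dec[of x c] that c(2) gc by simp
        have q2: "-\<sigma> * g x > 0" if "c < x" "x < d" for x
          using dec[of c x] that c(1) gc by simp
        have so1: "sign_on g {a<..<c} \<sigma>"
          by (rule sign_on_strict) (use q1 in auto)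
        have so2: "sign_on g {c<..<d} (-\<sigma>)"
          by (rule sign_on_strict) (use q2 in auto)
        have "pp g c (-\<sigma> # drop (Suc p) sf)" by (rule pp_merge[OF ppd' cd so2 nd])
        hence "pp g c (drop p sf)" using dp spn by simp
        hence "pp g a (sf!(p-1) # drop p sf)" using pp_cons[OF _ ca so1] s1 by simp
        then show ?thesis using p s1 False dp1 step.hyps
          by (intro exI[of _ "p-1"]) (auto simp: a_def)
      qed
    qed
  qed
  obtain p where "p < k" "pp g (b 0) (drop p sf)" using claim[of 0] by auto
  then show ?thesis using b0 by (auto simp: hsp_pp k_def)
qed

end
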